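(* Let $n\ge1$, $0<\lambda<1$, $p>1$, let $w$ be a non-negative locally integrable function on $\mathbb{R}^n$ and let $\Omega\subset\mathbb{R}^n$ be a nonempty closed set. For $0<s_1<s_2<\infty$ let $$\mathcal{W}_{s_1,s_2}:=\{Q\in\mathcal{Q}: s_1\,\mathrm{diam}\,Q\le \mathrm{dist}(Q,\Omega)\le s_2\,\mathrm{diam}\,Q\}.$$ Given $0<r_1<r_2<\infty$, there exist $1<\alpha_1<\alpha_2<\infty$ such that $$\|f\|_{\mathcal{M}^p_{\lambda,\mathcal{W}_{r_1,r_2}}(w)}\simeq\|f\|_{\mathcal{M}^p_{\lambda,\mathcal{W}_{\alpha_1,\alpha_2}}(w)},$$ i.e. there is $C\ge1$ independent of $f$ such that each norm is at most $C$ times the other, for all measurable $f$.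
   Context: $\mathcal{Q}$ denotes the family of all cubes in $\mathbb{R}^n$ with sides parallel to the axes. For a family $\mathcal{G}\subset\mathcal{Q}$, $$\|f\|_{\mathcal{M}^p_{\lambda,\mathcal{G}}(w)}:=\sup_{Q\in\mathcal{G}}\Big(\frac{1}{|Q|^{\lambda}}\int_Q|f|^pw\Big)^{1/p}.$$ *)

theory Defs
  imports "HOL-Analysis.Analysis"
begin

definition cube :: "'a::euclidean_space \<Rightarrow> real \<Rightarrow> 'a set" where
  "cube a l = cbox a (a + l *\<^sub>R One)"

definition cubes :: "'a::euclidean_space set set" where
  "cubes = {cube a l | a l. l > 0}"

definition whitney_cubes :: "'a::euclidean_space set \<Rightarrow> real \<Rightarrow> real \<Rightarrow> 'a set set" where
  "whitney_cubes \<Omega> s1 s2 =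
     {Q \<in> cubes. s1 * diameter Q \<le> setdist Q \<Omega> \<and> setdist Q \<Omega> \<le> s2 * diameter Q}"

text \<open>Power on [0,\<infinity>] with the convention \<infinity>^a = \<infinity> (used for a > 0).\<close>
definition enn_powr :: "ennreal \<Rightarrow> real \<Rightarrow> ennreal" where
  "enn_powr x a = (if x = top then top else ennreal (enn2real x powr a))"

definition morrey_norm ::
  "real \<Rightarrow> real \<Rightarrow> 'a::euclidean_space set set \<Rightarrow> ('a \<Rightarrow> real) \<Rightarrow> ('a \<Rightarrow> real) \<Rightarrow> ennreal" where
  "morrey_norm p lam G w f =
     (SUP Q\<in>G. enn_powr
        ((\<integral>\<^sup>+ x\<in>Q. ennreal (\<bar>f x\<bar> powr p * w x) \<partial>lebesgue) / ennreal (measure lebesgue Q powr lam))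
        (1 / p))"

end

theory Submission imports Defs begin
lemma cube_mem: "x \<in> cube a l \<longleftrightarrow> (\<forall>i\<in>Basis. a\<bullet>i \<le> x\<bullet>i \<and> x\<bullet>i \<le> a\<bullet>i + l)"
  by (simp add: cube_def mem_box inner_simps)
lemma cube_diam: "l \<ge> 0 \<Longrightarrow> diameter (cube (a::'a::euclidean_space) l) = l * norm (One::'a)"
  unfolding cube_def by (subst diameter_cbox) (auto simp: inner_simps dist_norm)
lemma cube_meas: "l \<ge> 0 \<Longrightarrow> measure lebesgue (cube (a::'a::euclidean_space) l) = l ^ DIM('a)"
  unfolding cube_def by (simp add: inner_simps)
lemma cube_sets: "cube a l \<in> sets lebesgue"
  unfolding cube_def by simp
lemma cube_ne: "l \<ge> 0 \<Longrightarrow> cube a l \<noteq> {}"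
  unfolding cube_def by (auto simp: inner_simps box_ne_empty)
lemma cube_compact: "compact (cube a l)"
  unfolding cube_def by simp

lemma cubes_props: "Q \<in> cubes \<Longrightarrow> Q \<in> sets lebesgue \<and> measure lebesgue Q > 0 \<and> compact Q \<and> Q \<noteq> {}"
  unfolding cubes_def using cube_sets cube_meas cube_compact cube_ne
  by (smt (verit, ccfv_SIG) mem_Collect_eq zero_less_power)

lemma setdist_hd:
  assumes "A \<noteq> {}" "B \<noteq> {}" "\<Omega> \<noteq> {}" "\<forall>x\<in>A. \<exists>y\<in>B. dist x y \<le> e"
  shows "setdist B \<Omega> \<le> setdist A \<Omega> + e"
proof -
  have "setdist B \<Omega> - e \<le> setdist A \<Omega>"
  proof (rule le_setdistI[OF assms(1,3)])
    fix x y assume xy: "x \<in> A" "y \<in> \<Omega>"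
    then obtain z where z: "z \<in> B" "dist x z \<le> e" using assms(4) by blast
    have "setdist B \<Omega> \<le> dist z y" by (rule setdist_le_dist[OF z(1) xy(2)])
    also have "\<dots> \<le> dist z x + dist x y" by (rule dist_triangle)
    finally show "setdist B \<Omega> - e \<le> dist x y" using z(2) by (simp add: dist_commute)
  qed
  thus ?thesis by simp
qed

lemma transfer:
  fixes G1 G2 :: "'a::euclidean_space set set" and f w :: "'a \<Rightarrow> real"
  assumes p: "p > 1" and lam: "lam > 0" and lam1: "lam \<le> 1" and M: "M \<ge> 1" and K: "K \<ge> 1" and C: "C \<ge> M * K"
    and G1: "G1 \<subseteq> cubes" and G2: "G2 \<subseteq> cubes"
    and meas: "\<And>Q. Q \<in> cubes \<Longrightarrow> (\<lambda>x. ennreal (\<bar>f x\<bar> powr p * w x) * indicator Q x) \<in> borel_measurable lebesgue"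
    and cov: "\<And>Q. Q \<in> G1 \<Longrightarrow> \<exists>F. finite F \<and> F \<subseteq> G2 \<and> real (card F) \<le> M \<and> Q \<subseteq> \<Union>F \<and>
                 (\<forall>Q'\<in>F. measure lebesgue Q' \<le> K * measure lebesgue Q)"
  shows "morrey_norm p lam G1 w f \<le> ennreal C * morrey_norm p lam G2 w f"
proof -
  define g where "g x = ennreal (\<bar>f x\<bar> powr p * w x)" for x
  define I where "I Q = (\<integral>\<^sup>+ x. g x * indicator Q x \<partial>lebesgue)" for Q
  define N where "N = morrey_norm p lam G2 w f"
  have Ndef: "N = (SUP Q\<in>G2. enn_powr (I Q / ennreal (measure lebesgue Q powr lam)) (1 / p))"
    unfolding N_def morrey_norm_def I_def g_def by simp
  have C1: "C \<ge> 1" using M K C by (smt (verit) mult_le_cancel_left1)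
  show ?thesis
    unfolding N_def[symmetric]
    unfolding morrey_norm_def
  proof (rule SUP_least)
    fix Q assume Q: "Q \<in> G1"
    let ?R = "(\<integral>\<^sup>+ x\<in>Q. ennreal (\<bar>f x\<bar> powr p * w x) \<partial>lebesgue) / ennreal (measure lebesgue Q powr lam)"
    have RI: "?R = I Q / ennreal (measure lebesgue Q powr lam)" unfolding I_def g_def by simp
    show "enn_powr ?R (1 / p) \<le> ennreal C * N"
    proof (cases "N = top")
      case True
      then show ?thesis using C1 by (simp add: ennreal_mult_top)
    next
      case False
      define n where "n = enn2real N"
      have n0: "n \<ge> 0" unfolding n_def by simp
      have Nn: "N = ennreal n" unfolding n_def using False by (simp add: less_top)
      have bnd: "I Q' \<le> ennreal (n powr p * measure lebesgue Q' powr lam)" if Q': "Q' \<in> G2" for Q'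
      proof -
        define m where "m = measure lebesgue Q'"
        have m: "m > 0" using cubes_props Q' G2 m_def by blast
        define R where "R = I Q' / ennreal (m powr lam)"
        have h: "enn_powr R (1/p) \<le> N"
          unfolding Ndef R_def m_def using Q' by (rule SUP_upper2) simp
        have Rt: "R \<noteq> top" using h False unfolding enn_powr_def by (auto simp: top_unique)
        hence "ennreal (enn2real R powr (1/p)) \<le> ennreal n" using h Nn unfolding enn_powr_def by simp
        hence h2: "enn2real R powr (1/p) \<le> n" using n0 by simp
        have "enn2real R = (enn2real R powr (1/p)) powr p"
          using p by (simp add: powr_powr)
        also have "\<dots> \<le> n powr p" using h2 p by (intro powr_mono2) auto
        finally have "R \<le> ennreal (n powr p)" using Rt
          by (metis ennreal_enn2real_if ennreal_leI)
        hence "R * ennreal (m powr lam) \<le> ennreal (n powr p) * ennreal (m powr lam)"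
          by (rule mult_right_mono) simp
        moreover have "R * ennreal (m powr lam) = I Q'"
          unfolding R_def using m by (simp add: ennreal_divide_times)
        ultimately show ?thesis unfolding m_def by (simp add: ennreal_mult)
      qed
      obtain F where F: "finite F" "F \<subseteq> G2" "real (card F) \<le> M" "Q \<subseteq> \<Union>F"
        "\<forall>Q'\<in>F. measure lebesgue Q' \<le> K * measure lebesgue Q" using cov[OF Q] by blast
      define m where "m = measure lebesgue Q"
      have m: "m > 0" using cubes_props Q G1 m_def by blast
      define c where "c = n powr p * (K * m) powr lam"
      have c0: "c \<ge> 0" unfolding c_def by simp
      have "I Q \<le> (\<integral>\<^sup>+ x. (\<Sum>Q'\<in>F. g x * indicator Q' x) \<partial>lebesgue)"
        unfolding I_def
      proof (rule nn_integral_mono)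
        fix x
        show "g x * indicator Q x \<le> (\<Sum>Q'\<in>F. g x * indicator Q' x)"
        proof (cases "x \<in> Q")
          case True
          then obtain Q0 where "Q0 \<in> F" "x \<in> Q0" using F(4) by blast
          hence "g x * indicator Q0 x \<le> (\<Sum>Q'\<in>F. g x * indicator Q' x)"
            using F(1) by (intro member_le_sum) auto
          then show ?thesis using True \<open>x \<in> Q0\<close> by simp
        qed simp
      qed
      also have "\<dots> = (\<Sum>Q'\<in>F. I Q')"
        unfolding I_def using F(1,2) G2 meas unfolding g_def by (subst nn_integral_sum) auto
      also have "\<dots> \<le> (\<Sum>Q'\<in>F. ennreal c)"
      proof (rule sum_mono)
        fix Q' assume Q': "Q' \<in> F"
        have "I Q' \<le> ennreal (n powr p * measure lebesgue Q' powr lam)" using bnd Q' F(2) by blast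
        also have "\<dots> \<le> ennreal c" unfolding c_def m_def using Q' F(5) lam n0
          by (intro ennreal_leI mult_left_mono powr_mono2) auto
        finally show "I Q' \<le> ennreal c" .
      qed
      also have "\<dots> = ennreal (real (card F) * c)" using c0 by (simp add: ennreal_mult ennreal_of_nat_eq_real_of_nat)
      also have "\<dots> \<le> ennreal (M * c)" using F(3) c0 by (intro ennreal_leI mult_right_mono)
      finally have IQ: "I Q \<le> ennreal (M * c)" .
      have "M * c = (M * K powr lam * n powr p) * m powr lam"
        unfolding c_def using K m by (simp add: powr_mult)
      hence "I Q \<le> ennreal (m powr lam) * ennreal (M * K powr lam * n powr p)"
        using IQ M K n0 by (simp add: ennreal_mult[symmetric] ac_simps)
      hence "I Q / ennreal (m powr lam) \<le> ennreal (M * K powr lam * n powr p)"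
        using m by (intro divide_le_posI_ennreal) auto
      hence "?R \<le> ennreal (M * K powr lam * n powr p)"
        unfolding RI m_def .
      hence Rt: "?R \<noteq> top" and Rle: "enn2real ?R \<le> M * K powr lam * n powr p"
        using M K n0 by (auto simp: top_unique enn2real_leI)
      have "enn2real ?R powr (1/p) \<le> (M * K powr lam * n powr p) powr (1/p)"
        using Rle p by (intro powr_mono2) auto
      also have "\<dots> = (M * K powr lam) powr (1/p) * n"
        using M K n0 p by (simp add: powr_mult powr_powr)
      also have "\<dots> \<le> C * n"
      proof (rule mult_right_mono[OF _ n0])
        have K1: "K powr lam \<le> K" using K lam1 powr_mono[of lam 1 K] by simp
        have K2: "K powr lam \<ge> 1" using K lam by (simp add: ge_one_powr_ge_zero)
        have "1 * 1 \<le> M * K powr lam" using M K2 by (intro mult_mono) auto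
        hence x1: "M * K powr lam \<ge> 1" by simp
        have "(M * K powr lam) powr (1/p) \<le> (M * K powr lam) powr 1"
          using x1 p by (intro powr_mono) auto
        also have "\<dots> \<le> M * K" using x1 K1 M by simp
        finally show "(M * K powr lam) powr (1/p) \<le> C" using C by linarith
      qed
      finally show ?thesis using Rt Nn n0 C1 unfolding enn_powr_def
        by (simp add: ennreal_mult[symmetric])
    qed
  qed
qed
lemma cube_norm_bound:
  assumes "x \<in> cube (a::'a::euclidean_space) s" "s \<ge> 0"
  shows "norm (x - a) \<le> s * norm (One::'a)"
proof -
  have "a \<in> cube a s" using assms(2) by (simp add: cube_mem)
  hence "dist a x \<le> diameter (cube a s)"
    using assms by (intro diameter_bounded_bound) (auto intro: compact_imp_bounded cube_compact)
  thus ?thesis using cube_diam[OF assms(2), of a] by (simp add: dist_norm norm_minus_commute)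
qed

lemma cube_setdist_lip:
  fixes a :: "'a::euclidean_space"
  assumes "s > 0" "t > 0" "\<Omega> \<noteq> {}"
  shows "setdist (cube a t) \<Omega> \<le> setdist (cube a s) \<Omega> + \<bar>s - t\<bar> * norm (One::'a)"
proof (rule setdist_hd)
  show "cube a s \<noteq> {}" "cube a t \<noteq> {}" using assms cube_ne[of s a] cube_ne[of t a] by auto
  show "\<Omega> \<noteq> {}" by fact
  show "\<forall>x\<in>cube a s. \<exists>y\<in>cube a t. dist x y \<le> \<bar>s - t\<bar> * norm (One::'a)"
  proof
    fix x assume x: "x \<in> cube a s"
    define y where "y = a + (t / s) *\<^sub>R (x - a)"
    have "y \<in> cube a t"
      unfolding cube_mem
    proof
      fix i :: 'a assume i: "i \<in> Basis"
      have xi: "0 \<le> (x - a) \<bullet> i" "(x - a) \<bullet> i \<le> s" using x i by (auto simp: cube_mem inner_simps)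
      have "(t / s) * ((x - a) \<bullet> i) \<le> (t / s) * s" using xi assms by (intro mult_left_mono) auto
      moreover have "0 \<le> (t / s) * ((x - a) \<bullet> i)" using xi assms by simp
      ultimately show "a \<bullet> i \<le> y \<bullet> i \<and> y \<bullet> i \<le> a \<bullet> i + t"
        unfolding y_def using assms by (simp add: inner_simps)
    qed
    moreover have "dist x y \<le> \<bar>s - t\<bar> * norm (One::'a)"
    proof -
      have "x - y = (1 - t / s) *\<^sub>R (x - a)" unfolding y_def by (simp add: algebra_simps)
      hence "dist x y = \<bar>1 - t / s\<bar> * norm (x - a)" by (simp add: dist_norm)
      also have "\<dots> \<le> \<bar>1 - t / s\<bar> * (s * norm (One::'a))"
        using cube_norm_bound[OF x] assms by (intro mult_left_mono) auto
      also have "\<dots> = \<bar>s - t\<bar> * norm (One::'a)"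
        using assms by (simp add: field_simps abs_div_pos[symmetric] abs_mult[symmetric])
      finally show ?thesis .
    qed
    ultimately show "\<exists>y\<in>cube a t. dist x y \<le> \<bar>s - t\<bar> * norm (One::'a)" by blast
  qed
qed

lemma enlarge:
  fixes a :: "'a::euclidean_space"
  assumes r: "0 < r1" "r1 \<le> r2" "r1 \<le> al1" "r1 \<le> al2" and Om: "\<Omega> \<noteq> {}" and l: "l > 0"
    and lo: "al1 * diameter (cube a l) \<le> setdist (cube a l) \<Omega>"
    and hi: "setdist (cube a l) \<Omega> \<le> al2 * diameter (cube a l)"
  shows "\<exists>s. l \<le> s \<and> s \<le> al2 * l / r1 \<and> cube a s \<in> whitney_cubes \<Omega> r1 r2"
proof -
  define h where "h s = setdist (cube a s) \<Omega>" for s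
  define e where "e = norm (One::'a)"
  have e: "e > 0" unfolding e_def by simp
  define T where "T = al2 * l / r1"
  have lT: "l \<le> T" unfolding T_def using r l by (simp add: field_simps)
  define \<phi> where "\<phi> s = h s - r1 * (s * e)" for s
  have lip: "e-lipschitz_on {l..T} h"
  proof (rule lipschitz_onI)
    fix s t assume st: "s \<in> {l..T}" "t \<in> {l..T}"
    hence "s > 0" "t > 0" using l by auto
    from cube_setdist_lip[OF this Om, of a] cube_setdist_lip[OF \<open>t>0\<close> \<open>s>0\<close> Om, of a]
    show "dist (h s) (h t) \<le> e * dist s t"
      unfolding h_def e_def dist_real_def by (simp add: abs_minus_commute mult.commute abs_le_iff)
  qed (use e in simp)
  have cont: "continuous_on {l..T} \<phi>"
    unfolding \<phi>_def using lipschitz_on_continuous_on[OF lip] by (intro continuous_intros)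
  have dl: "diameter (cube a l) = l * e" using cube_diam[of l a] l e_def by simp
  have p1: "\<phi> l \<ge> 0" unfolding \<phi>_def h_def using lo dl r l e
    by (smt (verit, best) mult_right_mono mult_pos_pos)
  have "h T \<le> h l" unfolding h_def
    using lT l by (intro setdist_subset_left cube_ne) (auto simp: cube_mem, fastforce)
  moreover have "r1 * (T * e) = al2 * (l * e)" unfolding T_def using r by (simp add: field_simps)
  ultimately have p2: "\<phi> T \<le> 0" unfolding \<phi>_def using hi unfolding h_def dl by linarith
  obtain s where s: "l \<le> s" "s \<le> T" "\<phi> s = 0" using IVT2'[of \<phi> T 0 l, OF p2 p1 lT cont] by blast
  have ds: "diameter (cube a s) = s * e" using cube_diam[of s a] s l e_def by simp
  have "cube a s \<in> cubes" unfolding cubes_def using s l by (auto intro!: exI[of _ a] exI[of _ s])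
  moreover have "r1 * diameter (cube a s) = setdist (cube a s) \<Omega>" using s(3) ds unfolding \<phi>_def h_def by simp
  moreover have "r1 * diameter (cube a s) \<le> r2 * diameter (cube a s)"
    using ds s l e r by (intro mult_right_mono) auto
  ultimately show ?thesis unfolding whitney_cubes_def using s T_def by (intro exI[of _ s]) auto
qed

lemma floor_helper:
  fixes u :: real and k :: nat
  assumes "0 \<le> u" "u \<le> real k" "k \<ge> 1"
  shows "real (min (nat \<lfloor>u\<rfloor>) (k - 1)) \<le> u \<and> u \<le> real (min (nat \<lfloor>u\<rfloor>) (k - 1)) + 1"
proof (cases "nat \<lfloor>u\<rfloor> \<le> k - 1")
  case True
  then have "min (nat \<lfloor>u\<rfloor>) (k - 1) = nat \<lfloor>u\<rfloor>" by simp
  moreover have "real (nat \<lfloor>u\<rfloor>) = of_int \<lfloor>u\<rfloor>" using assms by simp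
  ultimately show ?thesis by linarith
next
  case False
  then have "min (nat \<lfloor>u\<rfloor>) (k - 1) = k - 1" by simp
  moreover have "real (k - 1) = real k - 1" using assms by simp
  moreover have "of_int \<lfloor>u\<rfloor> \<ge> real k" using False assms by linarith
  ultimately show ?thesis using assms by linarith
qed

lemma subdivide:
  fixes a :: "'a::euclidean_space" and k :: nat
  assumes k: "k \<ge> 1" and l: "l > 0" and Om: "\<Omega> \<noteq> {}"
    and lo: "r1 * diameter (cube a l) \<le> setdist (cube a l) \<Omega>"
    and hi: "setdist (cube a l) \<Omega> \<le> r2 * diameter (cube a l)"
  shows "\<exists>F. finite F \<and> F \<subseteq> whitney_cubes \<Omega> (real k * r1) (real k * (r2 + 1)) \<and>
           real (card F) \<le> real k ^ DIM('a) \<and> cube a l \<subseteq> \<Union>F \<and>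
           (\<forall>Q'\<in>F. measure lebesgue Q' \<le> measure lebesgue (cube a l))"
proof -
  define h where "h = l / real k"
  have h: "h > 0" "h \<le> l" "real k * h = l" unfolding h_def using k l by (auto simp: field_simps)
  define e where "e = norm (One::'a)"
  have e: "e > 0" unfolding e_def by simp
  define c where "c j = a + (\<Sum>i\<in>Basis. (h * real (j i)) *\<^sub>R i)" for j :: "'a \<Rightarrow> nat"
  have cin: "c j \<bullet> i = a \<bullet> i + h * real (j i)" if "i \<in> Basis" for i j
    using that unfolding c_def by (simp add: inner_add_left inner_sum_left inner_Basis if_distrib[of "\<lambda>x. _ * x"] sum.delta cong: if_cong)
  define J where "J = PiE (Basis::'a set) (\<lambda>_. {..<k})"
  define F where "F = (\<lambda>j. cube (c j) h) ` J"
  define Q where "Q = cube a l"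
  have dQ: "diameter Q = l * e" unfolding Q_def e_def using cube_diam[of l a] l by simp
  have sub: "cube (c j) h \<subseteq> Q" if j: "j \<in> J" for j
  proof
    fix y assume y: "y \<in> cube (c j) h"
    show "y \<in> Q" unfolding Q_def cube_mem
    proof
      fix i :: 'a assume i: "i \<in> Basis"
      have ji: "real (j i) + 1 \<le> real k" using j i unfolding J_def by (auto simp: PiE_iff)
      have "h * (real (j i) + 1) \<le> h * real k" using ji h by (intro mult_left_mono) auto
      moreover have "h * real (j i) \<ge> 0" using h by simp
      ultimately show "a \<bullet> i \<le> y \<bullet> i \<and> y \<bullet> i \<le> a \<bullet> i + l"
      proof -
        have "c j \<bullet> i \<le> y \<bullet> i \<and> y \<bullet> i \<le> c j \<bullet> i + h" using y i unfolding cube_mem by blast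
        then show ?thesis using cin[OF i, of j] h(3) \<open>h * (real (j i) + 1) \<le> h * real k\<close> \<open>h * real (j i) \<ge> 0\<close>
          by (simp only: distrib_left mult.right_neutral mult.commute[of "real k" h]) linarith
      qed
    qed
  qed
  have Qne: "Q \<noteq> {}" unfolding Q_def using cube_ne[of l a] l by auto
  have Qb: "bounded Q" unfolding Q_def by (intro compact_imp_bounded cube_compact)
  have W: "cube (c j) h \<in> whitney_cubes \<Omega> (real k * r1) (real k * (r2 + 1))" if j: "j \<in> J" for j
  proof -
    let ?S = "cube (c j) h"
    have Sne: "?S \<noteq> {}" using cube_ne[of h "c j"] h by auto
    have dS: "diameter ?S = h * e" unfolding e_def using cube_diam[of h "c j"] h by simp
    have A1: "setdist Q \<Omega> \<le> setdist ?S \<Omega>" by (rule setdist_subset_left[OF Sne sub[OF j]])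
    have A2: "setdist ?S \<Omega> \<le> setdist Q \<Omega> + diameter Q"
    proof (rule setdist_hd[OF Qne Sne Om])
      obtain y where y: "y \<in> ?S" using Sne by blast
      show "\<forall>x\<in>Q. \<exists>y\<in>?S. dist x y \<le> diameter Q"
        using y sub[OF j] diameter_bounded_bound[OF Qb] by blast
    qed
    have A3: "real k * r1 * diameter ?S = r1 * diameter Q"
      using dS dQ h(3) by (simp add: algebra_simps)
    have A4: "real k * (r2 + 1) * diameter ?S = r2 * diameter Q + diameter Q"
      using dS dQ h(3) by (simp add: algebra_simps)
    have A5: "?S \<in> cubes" unfolding cubes_def using h by (auto intro!: exI[of _ "c j"] exI[of _ h])
    have "real k * r1 * diameter ?S \<le> setdist ?S \<Omega>" using A1 A3 lo unfolding Q_def by linarith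
    moreover have "setdist ?S \<Omega> \<le> real k * (r2 + 1) * diameter ?S" using A2 A4 hi unfolding Q_def by linarith
    ultimately show ?thesis unfolding whitney_cubes_def using A5 by blast
  qed
  have fin: "finite J" unfolding J_def by (simp add: finite_PiE)
  have "real (card F) \<le> real (card J)" unfolding F_def using fin by (simp add: card_image_le)
  also have "card J = k ^ DIM('a)" unfolding J_def by (simp add: card_PiE)
  finally have card: "real (card F) \<le> real k ^ DIM('a)" by simp
  have cover: "Q \<subseteq> \<Union>F"
  proof
    fix x assume x: "x \<in> Q"
    define j where "j = (\<lambda>i\<in>Basis. min (nat \<lfloor>((x - a) \<bullet> i) / h\<rfloor>) (k - 1))"
    have jJ: "j \<in> J" unfolding J_def j_def using k by (auto simp: PiE_iff)
    have "x \<in> cube (c j) h" unfolding cube_mem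
    proof
      fix i :: 'a assume i: "i \<in> Basis"
      define u where "u = ((x - a) \<bullet> i) / h"
      have xi: "0 \<le> (x - a) \<bullet> i" "(x - a) \<bullet> i \<le> l" using x i unfolding Q_def cube_mem by (auto simp: inner_simps)
      have u: "0 \<le> u" "u \<le> real k" unfolding u_def using xi h by (auto simp: field_simps)
      have ji: "j i = min (nat \<lfloor>u\<rfloor>) (k - 1)" unfolding j_def u_def using i by simp
      have fh: "real (j i) \<le> u \<and> u \<le> real (j i) + 1" using floor_helper[OF u k] ji by simp
      have "(x - a) \<bullet> i = h * u" unfolding u_def using h by simp
      hence "h * real (j i) \<le> (x - a) \<bullet> i \<and> (x - a) \<bullet> i \<le> h * real (j i) + h"
      proof -
        have "h * real (j i) \<le> h * u" using fh h by (intro mult_left_mono) auto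
        moreover have "h * u \<le> h * (real (j i) + 1)" using fh h by (intro mult_left_mono) auto
        ultimately show ?thesis using \<open>(x - a) \<bullet> i = h * u\<close> by (simp add: distrib_left)
      qed
      then show "c j \<bullet> i \<le> x \<bullet> i \<and> x \<bullet> i \<le> c j \<bullet> i + h"
        using cin[OF i, of j] by (simp add: inner_simps)
    qed
    then show "x \<in> \<Union>F" unfolding F_def using jJ by blast
  qed
  have meas: "\<forall>Q'\<in>F. measure lebesgue Q' \<le> measure lebesgue Q"
  proof
    fix Q' assume "Q' \<in> F"
    then obtain j where "Q' = cube (c j) h" unfolding F_def by blast
    then show "measure lebesgue Q' \<le> measure lebesgue Q"
      unfolding Q_def using cube_meas[of h "c j"] cube_meas[of l a] h l by (auto intro!: power_mono)
  qed
  show ?thesis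
    using fin W card cover meas unfolding F_def Q_def by (intro exI[of _ F]) (auto simp: F_def)
qed

theorem lemma3p1:
  fixes w :: "'a::euclidean_space \<Rightarrow> real"
    and \<Omega> :: "'a set"
    and p lam r1 r2 :: real
  assumes "0 < lam" "lam < 1" "p > 1"
    and "\<forall>x. 0 \<le> w x"
    and "\<forall>K. compact K \<longrightarrow> set_integrable lebesgue K w"
    and "closed \<Omega>" "\<Omega> \<noteq> {}"
    and "0 < r1" "r1 < r2"
  shows "\<exists>\<alpha>1 \<alpha>2. 1 < \<alpha>1 \<and> \<alpha>1 < \<alpha>2 \<and>
           (\<exists>C::real. C \<ge> 1 \<and>
             (\<forall>f \<in> borel_measurable lebesgue.
                morrey_norm p lam (whitney_cubes \<Omega> r1 r2) w f
                  \<le> ennreal C * morrey_norm p lam (whitney_cubes \<Omega> \<alpha>1 \<alpha>2) w f \<and>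
                morrey_norm p lam (whitney_cubes \<Omega> \<alpha>1 \<alpha>2) w f
                  \<le> ennreal C * morrey_norm p lam (whitney_cubes \<Omega> r1 r2) w f))"
proof -
  obtain k :: nat where kk: "1 < real k * r1" using ex_less_of_nat_mult[OF assms(8), of 1] by blast
  have k: "k \<ge> 1" using kk assms(8) by (cases k) auto
  define al1 where "al1 = real k * r1"
  define al2 where "al2 = real k * (r2 + 1)"
  have al: "1 < al1" "al1 < al2" "r1 \<le> al1" "r1 \<le> al2"
  proof -
    have a1: "real k * r1 \<ge> 1 * r1" using k assms(8) by (intro mult_right_mono) auto
    have a2: "real k * r1 < real k * (r2 + 1)" using k assms(8,9) by (intro mult_strict_left_mono) auto
    show "1 < al1" "al1 < al2" "r1 \<le> al1" "r1 \<le> al2" unfolding al1_def al2_def using kk a1 a2 by auto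
  qed
  define C1 where "C1 = real k ^ DIM('a)"
  define C2 where "C2 = (al2 / r1) ^ DIM('a)"
  have C1: "C1 \<ge> 1" unfolding C1_def using k by simp
  have C2: "C2 \<ge> 1" unfolding C2_def using al assms(8) by (simp add: one_le_power)
  define C where "C = C1 * C2"
  have C: "C \<ge> 1" "C \<ge> C1 * 1" "C \<ge> 1 * C2"
  proof -
    have "C1 * 1 \<le> C1 * C2" using C1 C2 by (intro mult_left_mono) auto
    moreover have "1 * C2 \<le> C1 * C2" using C1 C2 by (intro mult_right_mono) auto
    ultimately show "C \<ge> 1" "C \<ge> C1 * 1" "C \<ge> 1 * C2" unfolding C_def using C1 C2
      by linarith+
  qed
  have Wc: "whitney_cubes \<Omega> s1 s2 \<subseteq> cubes" for s1 s2 unfolding whitney_cubes_def by auto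
  have Wd: "\<exists>a l. Q = cube a l \<and> l > 0 \<and> s1 * diameter (cube a l) \<le> setdist (cube a l) \<Omega> \<and>
      setdist (cube a l) \<Omega> \<le> s2 * diameter (cube a l)" if "Q \<in> whitney_cubes \<Omega> s1 s2" for Q s1 s2
    using that unfolding whitney_cubes_def cubes_def by auto
  show ?thesis
  proof (intro exI conjI)
    show "1 < al1" "al1 < al2" "C \<ge> 1" using al C by auto
    show "\<forall>f \<in> borel_measurable lebesgue.
                morrey_norm p lam (whitney_cubes \<Omega> r1 r2) w f
                  \<le> ennreal C * morrey_norm p lam (whitney_cubes \<Omega> al1 al2) w f \<and>
                morrey_norm p lam (whitney_cubes \<Omega> al1 al2) w f
                  \<le> ennreal C * morrey_norm p lam (whitney_cubes \<Omega> r1 r2) w f"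
    proof
      fix f :: "'a \<Rightarrow> real" assume f: "f \<in> borel_measurable lebesgue"
      have meas: "(\<lambda>x. ennreal (\<bar>f x\<bar> powr p * w x) * indicator Q x) \<in> borel_measurable lebesgue"
        if Q: "Q \<in> cubes" for Q
      proof -
        have "set_integrable lebesgue Q w" using assms(5) cubes_props[OF Q] by blast
        hence wm: "(\<lambda>x. indicator Q x *\<^sub>R w x) \<in> borel_measurable lebesgue"
          unfolding set_integrable_def by (rule borel_measurable_integrable)
        have eq: "(\<lambda>x. ennreal (\<bar>f x\<bar> powr p * w x) * indicator Q x) =
                  (\<lambda>x. ennreal (\<bar>f x\<bar> powr p * (indicator Q x *\<^sub>R w x)))"
          by (auto simp: indicator_def fun_eq_iff)
        show ?thesis unfolding eq using f wm by measurable
      qed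
      have d1: "morrey_norm p lam (whitney_cubes \<Omega> r1 r2) w f
                  \<le> ennreal C * morrey_norm p lam (whitney_cubes \<Omega> al1 al2) w f"
      proof (rule transfer[OF assms(3,1) _ _ _ _ Wc Wc meas])
        show "1 \<le> C1" "1 \<le> (1::real)" "C1 * 1 \<le> C" using C1 C by auto
        fix Q assume "Q \<in> whitney_cubes \<Omega> r1 r2"
        then obtain a l where Q: "Q = cube a l" "l > 0" "r1 * diameter (cube a l) \<le> setdist (cube a l) \<Omega>"
          "setdist (cube a l) \<Omega> \<le> r2 * diameter (cube a l)" using Wd by blast
        from subdivide[OF k Q(2) assms(7) Q(3,4)]
        show "\<exists>F. finite F \<and> F \<subseteq> whitney_cubes \<Omega> al1 al2 \<and> real (card F) \<le> C1 \<and> Q \<subseteq> \<Union>F \<and>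
                 (\<forall>Q'\<in>F. measure lebesgue Q' \<le> 1 * measure lebesgue Q)"
          unfolding al1_def al2_def C1_def Q(1) by simp
      qed (use assms in auto)
      have d2: "morrey_norm p lam (whitney_cubes \<Omega> al1 al2) w f
                  \<le> ennreal C * morrey_norm p lam (whitney_cubes \<Omega> r1 r2) w f"
      proof (rule transfer[OF assms(3,1) _ _ _ _ Wc Wc meas])
        show "1 \<le> (1::real)" "1 \<le> C2" "1 * C2 \<le> C" using C2 C by auto
        fix Q assume "Q \<in> whitney_cubes \<Omega> al1 al2"
        then obtain a l where Q: "Q = cube a l" "l > 0" "al1 * diameter (cube a l) \<le> setdist (cube a l) \<Omega>"
          "setdist (cube a l) \<Omega> \<le> al2 * diameter (cube a l)" using Wd by blast
        obtain s where s: "l \<le> s" "s \<le> al2 * l / r1" "cube a s \<in> whitney_cubes \<Omega> r1 r2"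
          using enlarge[OF assms(8) _ al(3,4) assms(7) Q(2-4), of r2] assms(9) by auto
        have sub: "cube a l \<subseteq> cube a s" using s(1) by (auto simp: cube_mem, fastforce)
        have "measure lebesgue (cube a s) = s ^ DIM('a)" using s Q(2) by (simp add: cube_meas)
        also have "\<dots> \<le> (al2 / r1 * l) ^ DIM('a)" using s Q(2) by (intro power_mono) auto
        also have "\<dots> = C2 * measure lebesgue (cube a l)" unfolding C2_def using Q(2) 
          by (simp add: cube_meas power_mult_distrib[symmetric] mult.commute)
        finally have "measure lebesgue (cube a s) \<le> C2 * measure lebesgue Q" unfolding Q(1) .
        then show "\<exists>F. finite F \<and> F \<subseteq> whitney_cubes \<Omega> r1 r2 \<and> real (card F) \<le> 1 \<and> Q \<subseteq> \<Union>F \<and>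
                 (\<forall>Q'\<in>F. measure lebesgue Q' \<le> C2 * measure lebesgue Q)"
          using s sub Q(1) by (intro exI[of _ "{cube a s}"]) auto
      qed (use assms in auto)
      show "morrey_norm p lam (whitney_cubes \<Omega> r1 r2) w f
                  \<le> ennreal C * morrey_norm p lam (whitney_cubes \<Omega> al1 al2) w f \<and>
                morrey_norm p lam (whitney_cubes \<Omega> al1 al2) w f
                  \<le> ennreal C * morrey_norm p lam (whitney_cubes \<Omega> r1 r2) w f" using d1 d2 by blast
    qed
  qed
qed
end
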